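(* Let $\mu_1<\mu_2$, $\alpha_0,\beta_0>0$, and let $G$ be the distribution of $(x,y)$ on $\mathbb{R}\times\{-1,+1\}$ with $y$ uniform on $\{-1,+1\}$, $x\mid y=-1\sim\mathrm{N}(\mu_1,\alpha_0,\beta_0)$, $x\mid y=+1\sim\mathrm{N}(\mu_2,\alpha_0,\beta_0)$. For $\theta\in\mathbb{R}$ let $f_\theta(x)=\mathrm{sign}(x+\theta)$, $\mathcal{L}(f_\theta)=\Pr_{(x,y)\sim G}[f_\theta(x)\ne y]$, and $\theta^\star=-\frac{\mu_1+\mu_2}{2}$. Then: (i) there is a constant $C_1'>0$ depending only on $\mu_1,\mu_2,\alpha_0,\beta_0$ with $\mathcal{L}(f_\theta)-\mathcal{L}(f_{\theta^\star})\le C_1'|\theta-\theta^\star|$ for all $\theta$; (ii) $\epsilon_0:=\mathbb{E}_{(x,y)\sim G}|x-y+\theta^\star|-\mathbb{E}_{(x,y)\sim G}|x-f_{\theta^\star}(x)+\theta^\star|>0$; (iii) for $\rho\in[0,1]$, let $G'_\rho$ be the distribution of $(x,y')$ where $(x,y)\sim G$ and $y'=\rho f_{\theta^\star}(x)+(1-\rho)y$. Fix $\theta_0\in\mathbb{R}$, $\eta\in(0,1)$, let $(x_t,y'_t)_{t\ge0}$ be i.i.d. from $G'_\rho$, and set $\theta_{t+1}=\theta_t-\eta(\theta_t+x_t-y'_t)$. Then for every $t\in\mathbb{N}$, $$\mathbb{E}\big[\mathcal{L}(f_{\theta_t})\big]-\mathcal{L}(f_{\theta^\star})\le C_2(1-\eta)^t+\big(1-(1-\eta)^t\big)\big(C_3-C_4\rho\big),$$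 where $C_2=C_1'|\theta_0-\theta^\star|$, $C_3=C_1'\,\mathbb{E}_{(x,y)\sim G}|x-y+\theta^\star|$ and $C_4=C_1'\epsilon_0>0$. In particular the bound is strictly decreasing in $\rho$ whenever $t\ge1$.
   Context: $\mathrm{N}(\mu,\alpha,\beta)$ denotes the generalized Gaussian distribution on $\mathbb{R}$ with density $\frac{\beta}{2\alpha\Gamma(1/\beta)}e^{-(|x-\mu|/\alpha)^\beta}$. The expectation is over the random samples; $\theta_0$ is deterministic. The value of $\mathrm{sign}(0)$ is irrelevant (a null event). *)

theory Defs
  imports "HOL-Probability.Probability"
begin

definition gg_density :: "real \<Rightarrow> real \<Rightarrow> real \<Rightarrow> real \<Rightarrow> real" where
  "gg_density mu alpha beta x =
     beta / (2 * alpha * Gamma (1 / beta)) * exp (- ((\<bar>x - mu\<bar> / alpha) powr beta))"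

definition gg_measure :: "real \<Rightarrow> real \<Rightarrow> real \<Rightarrow> real measure" where
  "gg_measure mu alpha beta = density lborel (\<lambda>x. ennreal (gg_density mu alpha beta x))"

definition G_joint :: "real \<Rightarrow> real \<Rightarrow> real \<Rightarrow> real \<Rightarrow> (real \<times> real) measure" where
  "G_joint mu1 mu2 alpha beta =
     Giry_Monad.bind (measure_pmf (pmf_of_set {-1, 1::real}))
       (\<lambda>y. distr (gg_measure (if y = -1 then mu1 else mu2) alpha beta)
                   (borel \<Otimes>\<^sub>M borel) (\<lambda>x. (x, y)))"

text \<open>Classifier f_theta(x) = sign(x + theta) (sgn 0 = 0, a null event).\<close>
definition clf :: "real \<Rightarrow> real \<Rightarrow> real" where
  "clf theta x = sgn (x + theta)"

definition loss :: "(real \<times> real) measure \<Rightarrow> real \<Rightarrow> real" where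
  "loss G theta = measure G {p. clf theta (fst p) \<noteq> snd p}"

fun sgd_iter :: "real \<Rightarrow> real \<Rightarrow> (nat \<Rightarrow> 'a \<Rightarrow> real) \<Rightarrow> (nat \<Rightarrow> 'a \<Rightarrow> real) \<Rightarrow> nat \<Rightarrow> 'a \<Rightarrow> real" where
  "sgd_iter eta theta0 X Y' 0 \<omega> = theta0"
| "sgd_iter eta theta0 X Y' (Suc t) \<omega> =
     sgd_iter eta theta0 X Y' t \<omega> - eta * (sgd_iter eta theta0 X Y' t \<omega> + X t \<omega> - Y' t \<omega>)"

end

theory Submission
  imports Defs
begin

lemma Gamma_real_pos_half:
  assumes "s > (0::real)"
  shows "((\<lambda>t. t powr (s - 1) / exp t) has_integral Gamma s) {0<..}"
proof -
  have "((\<lambda>t. t powr (s - 1) / exp t) has_integral Gamma s) {0..}"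
    by (rule Gamma_integral_real) fact
  hence "((\<lambda>t. if t \<in> {0<..} then t powr (s - 1) / exp t else 0) has_integral Gamma s) {0..}"
    by (rule has_integral_spike [of "{0}", rotated 2]) auto
  also have "?this = ?thesis"
    by (subst has_integral_restrict) auto
  finally show ?thesis .
qed

lemma cov_half:
  fixes mu alpha beta k c :: real
  assumes a: "alpha > 0" and b: "beta > 0" and k: "k \<ge> 0" and c: "c = 1 \<or> c = -1"
  shows "((\<lambda>x. \<bar>x - mu\<bar> powr k * exp (- ((\<bar>x - mu\<bar> / alpha) powr beta)))
          has_integral alpha powr (k+1) / beta * Gamma ((k+1)/beta)) {x. 0 < c * (x - mu)}"
proof -
  define S where "S = {x. 0 < c * (x - mu)}"
  define s where "s = (k+1)/beta"
  have s: "s > 0" using b k by (simp add: s_def)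
  define g where "g x = (c * (x - mu) / alpha) powr beta" for x
  define g' where "g' x = c * beta / alpha * (c * (x - mu) / alpha) powr (beta - 1)" for x
  define f where "f t = t powr (s - 1) / exp t" for t
  have cc: "c * c = 1" using c by auto
  have abs_c: "\<bar>c\<bar> = 1" using c by auto
  have Sl: "S \<in> sets lebesgue" unfolding S_def using c by auto
  have der: "(g has_field_derivative g' x) (at x within S)" if "x \<in> S" for x
  proof -
    have pos: "c * (x - mu) / alpha > 0" using that a by (auto simp: S_def)
    have "((\<lambda>x. (c * (x - mu) / alpha) powr beta) has_field_derivative
        beta * (c * (x - mu) / alpha) powr (beta - 1) * (c / alpha)) (at x)"
      using pos by (auto intro!: derivative_eq_intros simp: field_simps)
    thus ?thesis unfolding g_def g'_def by (auto intro: has_field_derivative_at_within simp: field_simps)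
  qed
  have inj: "inj_on g S"
  proof (rule inj_onI)
    fix x y assume "x \<in> S" "y \<in> S" "g x = g y"
    hence "((c * (x - mu) / alpha) powr beta) powr (1/beta) = ((c * (y - mu) / alpha) powr beta) powr (1/beta)"
      by (simp add: g_def)
    hence "c * (x - mu) / alpha = c * (y - mu) / alpha"
      using a b \<open>x \<in> S\<close> \<open>y \<in> S\<close> by (simp add: S_def powr_powr)
    hence "c * c * (x - mu) = c * c * (y - mu)" using a by (simp add: field_simps)
    thus "x = y" using cc by simp
  qed
  have img: "g ` S = {0<..}"
  proof
    show "g ` S \<subseteq> {0<..}" using a by (auto simp: S_def g_def)
    show "{0<..} \<subseteq> g ` S"
    proof
      fix t :: real assume t: "t \<in> {0<..}"
      define x where "x = mu + c * alpha * t powr (1/beta)"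
      have "c * (x - mu) = alpha * t powr (1/beta)" using cc by (simp add: x_def algebra_simps)
      hence "x \<in> S" and "g x = t" using a b t by (auto simp: S_def g_def powr_powr)
      thus "t \<in> g ` S" by force
    qed
  qed
  have F: "f absolutely_integrable_on {0<..} \<and> integral {0<..} f = Gamma s"
  proof
    have G: "(f has_integral Gamma s) {0<..}" using Gamma_real_pos_half[OF s] unfolding f_def .
    show "f absolutely_integrable_on {0<..}"
      by (rule nonnegative_absolutely_integrable_1[OF has_integral_integrable[OF G]]) (simp add: f_def)
    show "integral {0<..} f = Gamma s" using G by (rule integral_unique)
  qed
  have H: "(\<lambda>x. \<bar>g' x\<bar> * f (g x)) absolutely_integrable_on S \<and>
           integral S (\<lambda>x. \<bar>g' x\<bar> * f (g x)) = Gamma s"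
    using has_absolute_integral_change_of_variables_1'[OF Sl der inj, of f "Gamma s", unfolded img] F by blast
  hence H2: "((\<lambda>x. \<bar>g' x\<bar> * f (g x)) has_integral Gamma s) S"
  proof -
    have "(\<lambda>x. \<bar>g' x\<bar> * f (g x)) integrable_on S"
      using H set_lebesgue_integral_eq_integral(1) by blast
    from integrable_integral[OF this] show ?thesis using H by simp
  qed
  have eq: "\<bar>g' x\<bar> * f (g x) = beta / alpha powr (k+1) *
      (\<bar>x - mu\<bar> powr k * exp (- ((\<bar>x - mu\<bar> / alpha) powr beta)))" if "x \<in> S" for x
  proof -
    have ab: "c * (x - mu) = \<bar>x - mu\<bar>" using that c by (auto simp: S_def)
    have p: "\<bar>x - mu\<bar> > 0" using that ab by (auto simp: S_def)
    let ?u = "\<bar>x - mu\<bar> / alpha"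
    have u: "?u > 0" using p a by simp
    have e1: "\<bar>g' x\<bar> * f (g x) = beta / alpha * (?u powr (beta - 1) * (?u powr beta) powr (s - 1)) / exp (?u powr beta)"
      using ab a b u abs_c by (simp add: g'_def f_def g_def abs_mult)
    have e2: "?u powr (beta - 1) * (?u powr beta) powr (s - 1) = ?u powr k"
      using b u by (simp add: powr_powr s_def powr_add[symmetric] field_simps)
    have e3: "?u powr k = \<bar>x - mu\<bar> powr k / alpha powr k" using a p by (simp add: powr_divide)
    have e4: "alpha powr (k+1) = alpha powr k * alpha" using a by (simp add: powr_add)
    show ?thesis unfolding e1 e2 e3 e4 using a
      by (simp add: exp_minus field_simps)
  qed
  have "((\<lambda>x. (alpha powr (k+1) / beta) * (\<bar>g' x\<bar> * f (g x))) has_integral alpha powr (k+1) / beta * Gamma s) S"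
    by (rule has_integral_mult_right[OF H2])
  hence "((\<lambda>x. \<bar>x - mu\<bar> powr k * exp (- ((\<bar>x - mu\<bar> / alpha) powr beta))) has_integral alpha powr (k+1) / beta * Gamma s) S"
    by (rule has_integral_eq[rotated]) (use a b eq in simp)
  thus ?thesis by (simp add: S_def s_def)
qed

lemma gg_full:
  fixes mu alpha beta k :: real
  assumes a: "alpha > 0" and b: "beta > 0" and k: "k \<ge> 0"
    and h: "\<And>x. x \<noteq> mu \<Longrightarrow> h x = \<bar>x - mu\<bar> powr k * exp (- ((\<bar>x - mu\<bar> / alpha) powr beta))"
  shows "(h has_integral 2 * (alpha powr (k+1) / beta * Gamma ((k+1)/beta))) UNIV"
proof -
  let ?I = "alpha powr (k+1) / beta * Gamma ((k+1)/beta)"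
  have p: "(h has_integral ?I) {x. 0 < 1 * (x - mu)}"
    by (rule has_integral_eq[rotated, OF cov_half[OF a b k, of 1 mu]]) (use h in auto)
  have n: "(h has_integral ?I) {x. 0 < (-1) * (x - mu)}"
    by (rule has_integral_eq[rotated, OF cov_half[OF a b k, of "-1" mu]]) (use h in auto)
  have "(h has_integral (?I + ?I)) ({x. 0 < 1 * (x - mu)} \<union> {x. 0 < (-1) * (x - mu)})"
    by (rule has_integral_Un[OF p n]) (auto intro: negligible_subset[OF negligible_empty])
  moreover have "{x. 0 < 1 * (x - mu)} \<union> {x. 0 < (-1) * (x - mu)} = UNIV - {mu}" by auto
  ultimately have "(h has_integral (?I + ?I)) (UNIV - {mu})" by simp
  hence "(h has_integral (?I + ?I)) UNIV"
    by (rule has_integral_spike_set_eq[THEN iffD1, rotated 2])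
       (auto intro: negligible_subset[OF negligible_sing[of mu]])
  thus ?thesis by simp
qed

definition ggD :: "real \<Rightarrow> real \<Rightarrow> real" where
  "ggD alpha beta = beta / (2 * alpha * Gamma (1 / beta))"

lemma ggD_pos: "alpha > 0 \<Longrightarrow> beta > 0 \<Longrightarrow> ggD alpha beta > 0"
  unfolding ggD_def by (intro divide_pos_pos mult_pos_pos Gamma_real_pos) auto

lemma gg_density_alt: "gg_density mu alpha beta x = ggD alpha beta * exp (- ((\<bar>x - mu\<bar> / alpha) powr beta))"
  unfolding gg_density_def ggD_def by simp

lemma gg_density_nonneg: "alpha > 0 \<Longrightarrow> beta > 0 \<Longrightarrow> gg_density mu alpha beta x \<ge> 0"
  unfolding gg_density_alt using ggD_pos[of alpha beta] by simp

lemma gg_density_le: "alpha > 0 \<Longrightarrow> beta > 0 \<Longrightarrow> gg_density mu alpha beta x \<le> ggD alpha beta"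
  unfolding gg_density_alt using ggD_pos[of alpha beta] by (simp add: mult_le_cancel_left1)

lemma gg_density_borel[measurable]: "gg_density mu alpha beta \<in> borel_measurable borel"
  unfolding gg_density_def by measurable

lemma sets_gg[simp, measurable_cong]: "sets (gg_measure mu alpha beta) = sets borel"
  unfolding gg_measure_def by simp

lemma space_gg[simp]: "space (gg_measure mu alpha beta) = UNIV"
  unfolding gg_measure_def by simp

lemma gg_nn_moment:
  assumes a: "alpha > 0" and b: "beta > 0" and k: "k \<ge> 0"
  shows "(\<integral>\<^sup>+x. ennreal (gg_density mu alpha beta x * \<bar>x - mu\<bar> powr k) \<partial>lborel)
     = ennreal (ggD alpha beta * (2 * (alpha powr (k+1) / beta * Gamma ((k+1)/beta))))"
proof -
  have "((\<lambda>x. gg_density mu alpha beta x * \<bar>x - mu\<bar> powr k) has_integral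
        ggD alpha beta * (2 * (alpha powr (k+1) / beta * Gamma ((k+1)/beta)))) UNIV"
  proof -
    have "((\<lambda>x. ggD alpha beta * (\<bar>x - mu\<bar> powr k * exp (- ((\<bar>x - mu\<bar> / alpha) powr beta)))) has_integral
        ggD alpha beta * (2 * (alpha powr (k+1) / beta * Gamma ((k+1)/beta)))) UNIV"
      by (rule has_integral_mult_right[OF gg_full[OF a b k]]) simp
    thus ?thesis by (simp add: gg_density_alt mult_ac)
  qed
  from nn_integral_has_integral_lebesgue'[OF _ this] show ?thesis
    using gg_density_nonneg[OF a b] by simp
qed

lemma gg_nn_total:
  assumes a: "alpha > 0" and b: "beta > 0"
  shows "(\<integral>\<^sup>+x. ennreal (gg_density mu alpha beta x) \<partial>lborel) = 1"
proof -
  have "((\<lambda>x. gg_density mu alpha beta x) has_integral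
        ggD alpha beta * (2 * (alpha powr (0+1) / beta * Gamma ((0+1)/beta)))) UNIV"
  proof -
    have "((\<lambda>x. ggD alpha beta * exp (- ((\<bar>x - mu\<bar> / alpha) powr beta))) has_integral
        ggD alpha beta * (2 * (alpha powr (0+1) / beta * Gamma ((0+1)/beta)))) UNIV"
      by (rule has_integral_mult_right[OF gg_full[OF a b order_refl, where mu=mu and h="\<lambda>x. exp (- ((\<bar>x - mu\<bar> / alpha) powr beta))"]]) simp
    thus ?thesis by (simp add: gg_density_alt mult_ac)
  qed
  moreover have "ggD alpha beta * (2 * (alpha powr (0+1) / beta * Gamma ((0+1)/beta))) = 1"
  proof -
    have "Gamma (1/beta) > 0" using b by (intro Gamma_real_pos) simp
    hence g: "Gamma (1/beta) \<noteq> 0" by linarith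
    show ?thesis using a b g unfolding ggD_def by (simp add: field_simps)
  qed
  ultimately have "((\<lambda>x. gg_density mu alpha beta x) has_integral 1) UNIV" by simp
  from nn_integral_has_integral_lebesgue'[OF _ this] show ?thesis
    using gg_density_nonneg[OF a b] by simp
qed

lemma gg_prob:
  assumes a: "alpha > 0" and b: "beta > 0"
  shows "prob_space (gg_measure mu alpha beta)"
  by (rule prob_spaceI) (simp add: gg_measure_def emeasure_density gg_nn_total[OF a b])

lemma gg_nn_abs_finite:
  assumes a: "alpha > 0" and b: "beta > 0"
  shows "(\<integral>\<^sup>+x. ennreal \<bar>x - c\<bar> \<partial>gg_measure mu alpha beta) < \<infinity>"
proof -
  have "(\<integral>\<^sup>+x. ennreal \<bar>x - c\<bar> \<partial>gg_measure mu alpha beta)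
      = (\<integral>\<^sup>+x. ennreal (gg_density mu alpha beta x) * ennreal \<bar>x - c\<bar> \<partial>lborel)"
    unfolding gg_measure_def by (simp add: nn_integral_density)
  also have "\<dots> \<le> (\<integral>\<^sup>+x. ennreal (gg_density mu alpha beta x * \<bar>x - mu\<bar> powr 1)
        + ennreal \<bar>mu - c\<bar> * ennreal (gg_density mu alpha beta x) \<partial>lborel)"
  proof (rule nn_integral_mono)
    fix x
    have "gg_density mu alpha beta x * \<bar>x - c\<bar> \<le> gg_density mu alpha beta x * \<bar>x - mu\<bar> + \<bar>mu - c\<bar> * gg_density mu alpha beta x"
    proof -
      have "\<bar>x - c\<bar> * gg_density mu alpha beta x \<le> (\<bar>x - mu\<bar> + \<bar>mu - c\<bar>) * gg_density mu alpha beta x"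
        using gg_density_nonneg[OF a b, of mu x] abs_triangle_ineq[of "x - mu" "mu - c"]
        by (intro mult_right_mono) auto
      thus ?thesis by (simp add: algebra_simps)
    qed
    thus "ennreal (gg_density mu alpha beta x) * ennreal \<bar>x - c\<bar>
      \<le> ennreal (gg_density mu alpha beta x * \<bar>x - mu\<bar> powr 1) + ennreal \<bar>mu - c\<bar> * ennreal (gg_density mu alpha beta x)"
      using gg_density_nonneg[OF a b, of mu x]
      by (simp add: ennreal_mult'[symmetric] ennreal_plus[symmetric] del: ennreal_plus)
  qed
  also have "\<dots> = (\<integral>\<^sup>+x. ennreal (gg_density mu alpha beta x * \<bar>x - mu\<bar> powr 1) \<partial>lborel)
        + ennreal \<bar>mu - c\<bar> * (\<integral>\<^sup>+x. ennreal (gg_density mu alpha beta x) \<partial>lborel)"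
    by (simp add: nn_integral_add nn_integral_cmult)
  also have "\<dots> < \<infinity>" using gg_nn_moment[OF a b, of 1 mu] gg_nn_total[OF a b, of mu]
    by (simp add: ennreal_mult'[symmetric] ennreal_plus[symmetric] del: ennreal_plus)
  finally show ?thesis .
qed

lemma gg_emeasure_le:
  assumes a: "alpha > 0" and b: "beta > 0" and A: "A \<in> sets borel"
  shows "emeasure (gg_measure mu alpha beta) A \<le> ennreal (ggD alpha beta) * emeasure lborel A"
proof -
  have "emeasure (gg_measure mu alpha beta) A = (\<integral>\<^sup>+x. ennreal (gg_density mu alpha beta x) * indicator A x \<partial>lborel)"
    unfolding gg_measure_def using A by (simp add: emeasure_density)
  also have "\<dots> \<le> (\<integral>\<^sup>+x. ennreal (ggD alpha beta) * indicator A x \<partial>lborel)"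
    by (intro nn_integral_mono mult_right_mono) (simp_all add: ennreal_leI[OF gg_density_le[OF a b]])
  also have "\<dots> = ennreal (ggD alpha beta) * emeasure lborel A"
    using A by (simp add: nn_integral_cmult_indicator)
  finally show ?thesis .
qed

lemma gg_emeasure_ge:
  assumes a: "alpha > 0" and b: "beta > 0"
  shows "emeasure (gg_measure mu alpha beta) {r..} > 0"
proof -
  define m where "m = exp (- (((\<bar>r - mu\<bar> + 1) / alpha) powr beta))"
  have m: "m > 0" by (simp add: m_def)
  have "ennreal (ggD alpha beta * m) * emeasure lborel {r..r+1} \<le> (\<integral>\<^sup>+x. ennreal (gg_density mu alpha beta x) * indicator {r..} x \<partial>lborel)"
  proof -
    have "ennreal (ggD alpha beta * m) * emeasure lborel {r..r+1} = (\<integral>\<^sup>+x. ennreal (ggD alpha beta * m) * indicator {r..r+1} x \<partial>lborel)"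
      by (simp add: nn_integral_cmult_indicator)
    also have "\<dots> \<le> (\<integral>\<^sup>+x. ennreal (gg_density mu alpha beta x) * indicator {r..} x \<partial>lborel)"
    proof (rule nn_integral_mono)
      fix x
      show "ennreal (ggD alpha beta * m) * indicator {r..r+1} x \<le> ennreal (gg_density mu alpha beta x) * indicator {r..} x"
      proof (cases "x \<in> {r..r+1}")
        case True
        have "\<bar>x - mu\<bar> / alpha \<le> (\<bar>r - mu\<bar> + 1) / alpha"
          using True a by (intro divide_right_mono) auto
        hence "(\<bar>x - mu\<bar> / alpha) powr beta \<le> ((\<bar>r - mu\<bar> + 1) / alpha) powr beta"
          using a b by (intro powr_mono2) auto
        hence "m \<le> exp (- ((\<bar>x - mu\<bar> / alpha) powr beta))" by (simp add: m_def)
        hence "ggD alpha beta * m \<le> gg_density mu alpha beta x"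
          unfolding gg_density_alt using ggD_pos[OF a b] by simp
        thus ?thesis using True by (simp add: ennreal_leI)
      qed simp
    qed
    finally show ?thesis .
  qed
  moreover have "ennreal (ggD alpha beta * m) * emeasure lborel {r..r+1} > 0"
    using ggD_pos[OF a b] m by (simp add: ennreal_zero_less_mult_iff)
  ultimately have "(\<integral>\<^sup>+x. ennreal (gg_density mu alpha beta x) * indicator {r..} x \<partial>lborel) > 0"
    by (rule order.strict_trans2[rotated])
  thus ?thesis unfolding gg_measure_def by (simp add: emeasure_density)
qed

lemma G_kernel:
  assumes a: "alpha > 0" and b: "beta > 0"
  shows "(\<lambda>y. distr (gg_measure (if y = -1 then mu1 else mu2) alpha beta)
                   (borel \<Otimes>\<^sub>M borel) (\<lambda>x. (x, y::real)))
       \<in> measurable (measure_pmf (pmf_of_set {-1, 1::real})) (subprob_algebra (borel \<Otimes>\<^sub>M borel))"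
proof -
  have "distr (gg_measure m alpha beta) (borel \<Otimes>\<^sub>M borel) (\<lambda>x. (x, y::real)) \<in> space (subprob_algebra (borel \<Otimes>\<^sub>M borel))" for m y
  proof -
    interpret prob_space "gg_measure m alpha beta" using gg_prob[OF a b] .
    have "prob_space (distr (gg_measure m alpha beta) (borel \<Otimes>\<^sub>M borel) (\<lambda>x. (x, y::real)))"
      by (rule prob_space_distr) measurable
    thus ?thesis by (auto simp: space_subprob_algebra intro: prob_space_imp_subprob_space)
  qed
  thus ?thesis by simp
qed

lemma G_nn:
  assumes a: "alpha > 0" and b: "beta > 0" and f[measurable]: "f \<in> borel_measurable (borel \<Otimes>\<^sub>M borel)"
  shows "(\<integral>\<^sup>+p. f p \<partial>G_joint mu1 mu2 alpha beta) =
     ((\<integral>\<^sup>+x. f (x, -1) \<partial>gg_measure mu1 alpha beta) + (\<integral>\<^sup>+x. f (x, 1) \<partial>gg_measure mu2 alpha beta)) / 2"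
proof -
  have "(\<integral>\<^sup>+p. f p \<partial>G_joint mu1 mu2 alpha beta) =
     (\<integral>\<^sup>+y. \<integral>\<^sup>+p. f p \<partial>distr (gg_measure (if y = -1 then mu1 else mu2) alpha beta) (borel \<Otimes>\<^sub>M borel) (\<lambda>x. (x, y)) \<partial>measure_pmf (pmf_of_set {-1, 1::real}))"
    unfolding G_joint_def by (rule nn_integral_bind[OF f G_kernel[OF a b]])
  also have "\<dots> = ((\<integral>\<^sup>+x. f (x, -1) \<partial>gg_measure mu1 alpha beta) + (\<integral>\<^sup>+x. f (x, 1) \<partial>gg_measure mu2 alpha beta)) / 2"
    by (simp add: nn_integral_pmf_of_set nn_integral_distr)
  finally show ?thesis .
qed

lemma sets_G[simp, measurable_cong]:
  assumes a: "alpha > 0" and b: "beta > 0"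
  shows "sets (G_joint mu1 mu2 alpha beta) = sets (borel \<Otimes>\<^sub>M borel)"
  unfolding G_joint_def
  by (rule sets_bind_measurable[OF G_kernel[OF a b]]) simp

lemma space_G[simp]:
  assumes a: "alpha > 0" and b: "beta > 0"
  shows "space (G_joint mu1 mu2 alpha beta) = UNIV"
  using sets_eq_imp_space_eq[OF sets_G[OF a b]] by (simp add: space_pair_measure)

lemma G_emeasure:
  assumes a: "alpha > 0" and b: "beta > 0" and A: "A \<in> sets (borel \<Otimes>\<^sub>M borel)"
  shows "emeasure (G_joint mu1 mu2 alpha beta) A =
     (emeasure (gg_measure mu1 alpha beta) {x. (x, -1) \<in> A} + emeasure (gg_measure mu2 alpha beta) {x. (x, 1) \<in> A}) / 2"
proof -
  have m1: "{x. (x, c) \<in> A} \<in> sets borel" for c :: real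
  proof -
    have "(\<lambda>x. (x, c)) \<in> borel \<rightarrow>\<^sub>M borel \<Otimes>\<^sub>M borel" by measurable
    from measurable_sets[OF this A] show ?thesis by (simp add: vimage_def)
  qed
  have "emeasure (G_joint mu1 mu2 alpha beta) A = (\<integral>\<^sup>+p. indicator A p \<partial>G_joint mu1 mu2 alpha beta)"
    using A sets_G[OF a b] by (simp add: nn_integral_indicator)
  also have "\<dots> = ((\<integral>\<^sup>+x. indicator A (x, -1) \<partial>gg_measure mu1 alpha beta) + (\<integral>\<^sup>+x. indicator A (x, 1) \<partial>gg_measure mu2 alpha beta)) / 2"
    by (rule G_nn[OF a b]) (use A in measurable)
  finally have X: "emeasure (G_joint mu1 mu2 alpha beta) A = ((\<integral>\<^sup>+x. indicator A (x, -1) \<partial>gg_measure mu1 alpha beta) + (\<integral>\<^sup>+x. indicator A (x, 1) \<partial>gg_measure mu2 alpha beta)) / 2" .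
  have ind: "\<And>c x. (indicator A (x, c) :: ennreal) = indicator {x. (x, c) \<in> A} x"
    by (auto simp: indicator_def)
  show ?thesis unfolding X ind using m1 by (simp add: nn_integral_indicator)
qed

lemma G_prob:
  assumes a: "alpha > 0" and b: "beta > 0"
  shows "prob_space (G_joint mu1 mu2 alpha beta)"
proof
  have U: "UNIV \<in> sets (borel \<Otimes>\<^sub>M borel :: (real \<times> real) measure)"
    using sets.top[of "borel \<Otimes>\<^sub>M borel :: (real \<times> real) measure"] by (simp add: space_pair_measure)
  have "emeasure (G_joint mu1 mu2 alpha beta) UNIV = 1"
    using G_emeasure[OF a b U, of mu1 mu2] prob_space.emeasure_space_1[OF gg_prob[OF a b]]
    by simp
  thus "emeasure (G_joint mu1 mu2 alpha beta) (space (G_joint mu1 mu2 alpha beta)) = 1"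
    using a b by simp
qed

lemma G_AE_y:
  assumes a: "alpha > 0" and b: "beta > 0"
  shows "AE p in G_joint mu1 mu2 alpha beta. snd p = -1 \<or> snd p = 1"
proof (rule AE_I')
  let ?N = "{p::real\<times>real. \<not> (snd p = -1 \<or> snd p = 1)}"
  have N: "?N \<in> sets (borel \<Otimes>\<^sub>M borel)"
  proof -
    have "UNIV \<times> (- {-1, 1}) \<in> sets (borel \<Otimes>\<^sub>M borel :: (real \<times> real) measure)"
      by (intro pair_measureI) auto
    moreover have "?N = UNIV \<times> (- {-1, 1})" by auto
    ultimately show ?thesis by simp
  qed
  show "?N \<in> null_sets (G_joint mu1 mu2 alpha beta)"
    using G_emeasure[OF a b N, of mu1 mu2] N sets_G[OF a b] by (simp add: null_sets_def)
  show "{p \<in> space (G_joint mu1 mu2 alpha beta). \<not> (snd p = - 1 \<or> snd p = 1)} \<subseteq> ?N" by auto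
qed

lemma gg_measure_le:
  assumes a: "alpha > 0" and b: "beta > 0" and A: "A \<in> sets borel" and l: "emeasure lborel A = ennreal L" and L: "L \<ge> 0"
  shows "measure (gg_measure mu alpha beta) A \<le> ggD alpha beta * L"
proof -
  interpret prob_space "gg_measure mu alpha beta" using gg_prob[OF a b] .
  have "ennreal (measure (gg_measure mu alpha beta) A) \<le> ennreal (ggD alpha beta * L)"
    using gg_emeasure_le[OF a b A, of mu] l ggD_pos[OF a b] L
    by (simp add: emeasure_eq_measure ennreal_mult'[symmetric])
  thus ?thesis using ggD_pos[OF a b] L by (simp add: ennreal_le_iff)
qed

lemma gg_F1_lip:
  assumes a: "alpha > 0" and b: "beta > 0"
  shows "\<bar>measure (gg_measure mu alpha beta) {r..} - measure (gg_measure mu alpha beta) {s..}\<bar>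
       \<le> ggD alpha beta * \<bar>r - s\<bar>"
proof -
  interpret prob_space "gg_measure mu alpha beta" using gg_prob[OF a b] .
  have *: "\<bar>prob {r..} - prob {s..}\<bar> \<le> ggD alpha beta * \<bar>r - s\<bar>" if rs: "r \<le> s" for r s
  proof -
    have "prob ({r..} - {s..}) = prob {r..} - prob {s..}"
      using rs by (intro finite_measure_Diff) auto
    moreover have "{r..} - {s..} = {r..<s}" by auto
    moreover have "prob {r..<s} \<le> ggD alpha beta * (s - r)"
      by (rule gg_measure_le[OF a b]) (use rs in auto)
    moreover have "prob {s..} \<le> prob {r..}"
      using rs by (intro finite_measure_mono) auto
    ultimately show ?thesis using rs by simp
  qed
  show ?thesis
  proof (cases "r \<le> s")
    case True then show ?thesis using *[OF True] by simp
  next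
    case False then show ?thesis using *[of s r] by (simp add: abs_minus_commute)
  qed
qed

lemma gg_F2_lip:
  assumes a: "alpha > 0" and b: "beta > 0"
  shows "\<bar>measure (gg_measure mu alpha beta) {..r} - measure (gg_measure mu alpha beta) {..s}\<bar>
       \<le> ggD alpha beta * \<bar>r - s\<bar>"
proof -
  interpret prob_space "gg_measure mu alpha beta" using gg_prob[OF a b] .
  have *: "\<bar>prob {..r} - prob {..s}\<bar> \<le> ggD alpha beta * \<bar>r - s\<bar>" if rs: "r \<le> s" for r s
  proof -
    have "prob ({..s} - {..r}) = prob {..s} - prob {..r}"
      using rs by (intro finite_measure_Diff) auto
    moreover have "{..s} - {..r} = {r<..s}" by auto
    moreover have "prob {r<..s} \<le> ggD alpha beta * (s - r)"
      by (rule gg_measure_le[OF a b]) (use rs in auto)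
    moreover have "prob {..r} \<le> prob {..s}"
      using rs by (intro finite_measure_mono) auto
    ultimately show ?thesis using rs by simp
  qed
  show ?thesis
  proof (cases "r \<le> s")
    case True then show ?thesis using *[OF True] by simp
  next
    case False then show ?thesis using *[of s r] by (simp add: abs_minus_commute)
  qed
qed

lemma clf_measurable[measurable]: "clf th \<in> borel_measurable borel"
  unfolding clf_def by measurable

lemma enn2real_half: "0 \<le> s \<Longrightarrow> enn2real (ennreal s / 2) = s / 2"
proof -
  assume s: "0 \<le> s"
  have "ennreal s / 2 = ennreal s / ennreal 2" by simp
  also have "\<dots> = ennreal (s / 2)" using s by (rule divide_ennreal) simp
  finally show ?thesis using s by simp
qed

lemma avg_abs: "\<bar>a - c\<bar> \<le> (K::real) \<Longrightarrow> \<bar>b - d\<bar> \<le> K \<Longrightarrow> \<bar>(a + b) / 2 - (c + d) / 2\<bar> \<le> K"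
  by (simp add: abs_le_iff field_simps)

lemma loss_formula:
  assumes a: "alpha > 0" and b: "beta > 0"
  shows "loss (G_joint mu1 mu2 alpha beta) th =
     (measure (gg_measure mu1 alpha beta) {- th..} + measure (gg_measure mu2 alpha beta) {..- th}) / 2"
proof -
  let ?A = "{p::real\<times>real. clf th (fst p) \<noteq> snd p}"
  have "(\<lambda>p::real\<times>real. clf th (fst p) - snd p) \<in> borel_measurable (borel \<Otimes>\<^sub>M borel)" by measurable
  from measurable_sets[OF this, of "- {0}"]
  have "(\<lambda>p::real\<times>real. clf th (fst p) - snd p) -` (- {0}) \<inter> space (borel \<Otimes>\<^sub>M borel) \<in> sets (borel \<Otimes>\<^sub>M borel)" by auto
  moreover have "(\<lambda>p::real\<times>real. clf th (fst p) - snd p) -` (- {0}) \<inter> space (borel \<Otimes>\<^sub>M borel) = ?A"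
    by (auto simp: space_pair_measure)
  ultimately have A: "?A \<in> sets (borel \<Otimes>\<^sub>M borel)" by simp
  have e1: "{x. (x, -1) \<in> ?A} = {- th..}"
    by (auto simp: clf_def sgn_if split: if_splits)
  have e2: "{x. (x, 1) \<in> ?A} = {..- th}"
    by (auto simp: clf_def sgn_if split: if_splits)
  have "loss (G_joint mu1 mu2 alpha beta) th = enn2real (emeasure (G_joint mu1 mu2 alpha beta) ?A)"
    unfolding loss_def measure_def ..
  also have "\<dots> = enn2real ((ennreal (measure (gg_measure mu1 alpha beta) {- th..})
       + ennreal (measure (gg_measure mu2 alpha beta) {..- th})) / 2)"
  proof -
    interpret P1: prob_space "gg_measure mu1 alpha beta" using gg_prob[OF a b] .
    interpret P2: prob_space "gg_measure mu2 alpha beta" using gg_prob[OF a b] .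
    show ?thesis unfolding G_emeasure[OF a b A] e1 e2
      by (simp add: P1.emeasure_eq_measure P2.emeasure_eq_measure)
  qed
  also have "\<dots> = (measure (gg_measure mu1 alpha beta) {- th..} + measure (gg_measure mu2 alpha beta) {..- th}) / 2"
    by (simp add: ennreal_plus[symmetric] enn2real_half del: ennreal_plus)
  finally show ?thesis .
qed

lemma loss_lip:
  assumes a: "alpha > 0" and b: "beta > 0"
  shows "\<bar>loss (G_joint mu1 mu2 alpha beta) th - loss (G_joint mu1 mu2 alpha beta) th'\<bar> \<le> ggD alpha beta * \<bar>th - th'\<bar>"
proof -
  have 1: "\<bar>measure (gg_measure mu1 alpha beta) {- th..} - measure (gg_measure mu1 alpha beta) {- th'..}\<bar> \<le> ggD alpha beta * \<bar>th - th'\<bar>"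
    using gg_F1_lip[OF a b, of mu1 "-th" "-th'"] by (simp add: abs_minus_commute)
  have 2: "\<bar>measure (gg_measure mu2 alpha beta) {..- th} - measure (gg_measure mu2 alpha beta) {..- th'}\<bar> \<le> ggD alpha beta * \<bar>th - th'\<bar>"
    using gg_F2_lip[OF a b, of mu2 "-th" "-th'"] by (simp add: abs_minus_commute)
  show ?thesis unfolding loss_formula[OF a b] using avg_abs[OF 1 2] .
qed

lemma loss_cont:
  assumes a: "alpha > 0" and b: "beta > 0"
  shows "loss (G_joint mu1 mu2 alpha beta) \<in> borel_measurable borel"
proof -
  have "(ggD alpha beta)-lipschitz_on UNIV (loss (G_joint mu1 mu2 alpha beta))"
    by (rule lipschitz_onI) (use loss_lip[OF a b] ggD_pos[OF a b] in \<open>auto simp: dist_real_def\<close>)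
  from lipschitz_on_continuous_on[OF this] show ?thesis by (rule borel_measurable_continuous_onI)
qed

lemma loss_bounds:
  assumes a: "alpha > 0" and b: "beta > 0"
  shows "0 \<le> loss (G_joint mu1 mu2 alpha beta) th" "loss (G_joint mu1 mu2 alpha beta) th \<le> 1"
proof -
  interpret prob_space "G_joint mu1 mu2 alpha beta" using G_prob[OF a b] .
  show "0 \<le> loss (G_joint mu1 mu2 alpha beta) th" "loss (G_joint mu1 mu2 alpha beta) th \<le> 1"
    unfolding loss_def by simp_all
qed

lemma ennreal_two_half: "(2::ennreal) * (x / 2) = x"
  using mult_divide_eq_ennreal[of 2 x] by (simp add: ennreal_times_divide mult.commute)

lemma G_meas:
  assumes a: "alpha > 0" and b: "beta > 0" and f: "f \<in> borel_measurable (borel \<Otimes>\<^sub>M borel)"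
  shows "f \<in> borel_measurable (G_joint mu1 mu2 alpha beta)"
  by (subst measurable_cong_sets[OF sets_G[OF a b] refl]) (rule f)

lemma G_int_absx:
  assumes a: "alpha > 0" and b: "beta > 0"
  shows "integrable (G_joint mu1 mu2 alpha beta) (\<lambda>p. \<bar>fst p - c\<bar>)"
proof (rule integrableI_bounded)
  show "(\<lambda>p. \<bar>fst p - c\<bar>) \<in> borel_measurable (G_joint mu1 mu2 alpha beta)"
    by (rule G_meas[OF a b]) measurable
  have "(\<integral>\<^sup>+p. ennreal (norm \<bar>fst p - c\<bar>) \<partial>G_joint mu1 mu2 alpha beta)
     = ((\<integral>\<^sup>+x. ennreal \<bar>x - c\<bar> \<partial>gg_measure mu1 alpha beta) + (\<integral>\<^sup>+x. ennreal \<bar>x - c\<bar> \<partial>gg_measure mu2 alpha beta)) / 2"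
    by (subst G_nn[OF a b]) simp_all
  also have "\<dots> < \<infinity>" using gg_nn_abs_finite[OF a b, where c=c and mu=mu1] gg_nn_abs_finite[OF a b, where c=c and mu=mu2]
    by (simp add: ennreal_divide_eq_top_iff less_top[symmetric])
  finally show "(\<integral>\<^sup>+p. ennreal (norm \<bar>fst p - c\<bar>) \<partial>G_joint mu1 mu2 alpha beta) < \<infinity>" .
qed

lemma G_int_A:
  assumes a: "alpha > 0" and b: "beta > 0"
  shows "integrable (G_joint mu1 mu2 alpha beta) (\<lambda>p. \<bar>fst p - snd p + th\<bar>)"
proof -
  interpret prob_space "G_joint mu1 mu2 alpha beta" using G_prob[OF a b] .
  have I: "integrable (G_joint mu1 mu2 alpha beta) (\<lambda>p. \<bar>fst p - (- th)\<bar> + 1)"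
    using G_int_absx[OF a b, of mu1 mu2 "- th"] by simp
  show ?thesis
  proof (rule Bochner_Integration.integrable_bound[OF I])
    show "(\<lambda>p. \<bar>fst p - snd p + th\<bar>) \<in> borel_measurable (G_joint mu1 mu2 alpha beta)"
      by (rule G_meas[OF a b]) measurable
    show "AE p in G_joint mu1 mu2 alpha beta. norm \<bar>fst p - snd p + th\<bar> \<le> norm (\<bar>fst p - (- th)\<bar> + 1)"
      using G_AE_y[OF a b, of mu1 mu2] by eventually_elim auto
  qed
qed

lemma G_int_B:
  assumes a: "alpha > 0" and b: "beta > 0"
  shows "integrable (G_joint mu1 mu2 alpha beta) (\<lambda>p. \<bar>fst p - clf th (fst p) + th\<bar>)"
proof -
  interpret prob_space "G_joint mu1 mu2 alpha beta" using G_prob[OF a b] .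
  have I: "integrable (G_joint mu1 mu2 alpha beta) (\<lambda>p. \<bar>fst p - (- th)\<bar> + 1)"
    using G_int_absx[OF a b, of mu1 mu2 "- th"] by simp
  show ?thesis
  proof (rule Bochner_Integration.integrable_bound[OF I])
    show "(\<lambda>p. \<bar>fst p - clf th (fst p) + th\<bar>) \<in> borel_measurable (G_joint mu1 mu2 alpha beta)"
      by (rule G_meas[OF a b]) measurable
    show "AE p in G_joint mu1 mu2 alpha beta. norm \<bar>fst p - clf th (fst p) + th\<bar> \<le> norm (\<bar>fst p - (- th)\<bar> + 1)"
      by (rule AE_I2) (auto simp: clf_def sgn_if)
  qed
qed

lemma eps0_pos:
  assumes a: "alpha > 0" and b: "beta > 0"
  shows "(\<integral>p. \<bar>fst p - snd p + th\<bar> \<partial>G_joint mu1 mu2 alpha beta)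
       - (\<integral>p. \<bar>fst p - clf th (fst p) + th\<bar> \<partial>G_joint mu1 mu2 alpha beta) > 0"
proof -
  let ?G = "G_joint mu1 mu2 alpha beta"
  define h where "h p = \<bar>fst p - snd p + th\<bar> - \<bar>fst p - clf th (fst p) + th\<bar>" for p :: "real \<times> real"
  have hm[measurable]: "h \<in> borel_measurable (borel \<Otimes>\<^sub>M borel)" unfolding h_def by measurable
  have hi: "integrable ?G h" unfolding h_def by (intro Bochner_Integration.integrable_diff G_int_A[OF a b] G_int_B[OF a b])
  have eq: "(\<integral>p. \<bar>fst p - snd p + th\<bar> \<partial>?G) - (\<integral>p. \<bar>fst p - clf th (fst p) + th\<bar> \<partial>?G) = (\<integral>p. h p \<partial>?G)"
    unfolding h_def by (rule Bochner_Integration.integral_diff[symmetric]) (intro G_int_A[OF a b] G_int_B[OF a b])+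
  have hpos: "0 \<le> h p" if "snd p = -1 \<or> snd p = 1" for p
    using that unfolding h_def clf_def by (auto simp: sgn_if)
  have AEpos: "AE p in ?G. 0 \<le> h p"
    using G_AE_y[OF a b, of mu1 mu2] by eventually_elim (use hpos in auto)
  have hmG: "h \<in> borel_measurable ?G" by (rule G_meas[OF a b]) measurable
  have int_eq: "(\<integral>p. h p \<partial>?G) = enn2real (\<integral>\<^sup>+p. ennreal (h p) \<partial>?G)"
    by (rule integral_eq_nn_integral[OF hmG AEpos])
  have fin: "(\<integral>\<^sup>+p. ennreal (h p) \<partial>?G) < \<infinity>"
  proof -
    have "(\<integral>\<^sup>+p. ennreal (h p) \<partial>?G) \<le> (\<integral>\<^sup>+p. ennreal (norm (h p)) \<partial>?G)"
      by (intro nn_integral_mono ennreal_leI) simp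
    also have "\<dots> < \<infinity>" using hi unfolding integrable_iff_bounded by simp
    finally show ?thesis .
  qed
  have "ennreal 2 * emeasure (gg_measure mu1 alpha beta) {1 - th..} = (\<integral>\<^sup>+x. ennreal 2 * indicator {1 - th..} x \<partial>gg_measure mu1 alpha beta)"
    by (simp add: nn_integral_cmult_indicator)
  also have "\<dots> \<le> (\<integral>\<^sup>+x. ennreal (h (x, -1)) \<partial>gg_measure mu1 alpha beta)"
  proof (rule nn_integral_mono)
    fix x
    show "ennreal 2 * indicator {1 - th..} x \<le> ennreal (h (x, -1))"
    proof (cases "x \<in> {1 - th..}")
      case True
      hence "h (x, -1) = 2" unfolding h_def clf_def by (auto simp: sgn_if)
      thus ?thesis using True by simp
    qed simp
  qed
  also have "\<dots> \<le> (\<integral>\<^sup>+x. ennreal (h (x, -1)) \<partial>gg_measure mu1 alpha beta) + (\<integral>\<^sup>+x. ennreal (h (x, 1)) \<partial>gg_measure mu2 alpha beta)"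
    by simp
  finally have le: "ennreal 2 * emeasure (gg_measure mu1 alpha beta) {1 - th..} \<le> 2 * (\<integral>\<^sup>+p. ennreal (h p) \<partial>?G)"
    by (subst G_nn[OF a b]) (simp_all add: ennreal_two_half)
  have "0 < ennreal 2 * emeasure (gg_measure mu1 alpha beta) {1 - th..}"
    using gg_emeasure_ge[OF a b, of mu1 "1 - th"] by (simp add: ennreal_zero_less_mult_iff)
  hence "0 < 2 * (\<integral>\<^sup>+p. ennreal (h p) \<partial>?G)" using le by (rule order.strict_trans2)
  hence "0 < (\<integral>\<^sup>+p. ennreal (h p) \<partial>?G)" by (simp add: ennreal_zero_less_mult_iff)
  hence "0 < enn2real (\<integral>\<^sup>+p. ennreal (h p) \<partial>?G)" using fin by (simp add: enn2real_positive_iff)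
  thus ?thesis unfolding eq int_eq .
qed

lemma w_le:
  fixes x c y th rho :: real
  assumes "0 \<le> rho" "rho \<le> 1"
  shows "\<bar>x - (rho * c + (1 - rho) * y) + th\<bar> \<le> rho * \<bar>x - c + th\<bar> + (1 - rho) * \<bar>x - y + th\<bar>"
proof -
  have "x - (rho * c + (1 - rho) * y) + th = rho * (x - c + th) + (1 - rho) * (x - y + th)"
    by (simp add: algebra_simps)
  also have "\<bar>\<dots>\<bar> \<le> \<bar>rho * (x - c + th)\<bar> + \<bar>(1 - rho) * (x - y + th)\<bar>" by (rule abs_triangle_ineq)
  also have "\<dots> = rho * \<bar>x - c + th\<bar> + (1 - rho) * \<bar>x - y + th\<bar>" using assms by (simp add: abs_mult)
  finally show ?thesis .
qed

lemma sgd_step: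
  fixes th eta x y' ts :: real
  assumes "0 < eta" "eta < 1"
  shows "\<bar>(th - eta * (th + x - y')) - ts\<bar> \<le> (1 - eta) * \<bar>th - ts\<bar> + eta * \<bar>x - y' + ts\<bar>"
proof -
  have "(th - eta * (th + x - y')) - ts = (1 - eta) * (th - ts) - eta * (x - y' + ts)"
    by (simp add: algebra_simps)
  also have "\<bar>\<dots>\<bar> \<le> \<bar>(1 - eta) * (th - ts)\<bar> + \<bar>eta * (x - y' + ts)\<bar>" by (rule abs_triangle_ineq4)
  also have "\<dots> = (1 - eta) * \<bar>th - ts\<bar> + eta * \<bar>x - y' + ts\<bar>" using assms by (simp add: abs_mult)
  finally show ?thesis .
qed

lemma sgd_bound:
  fixes M :: "'a measure" and X Y :: "nat \<Rightarrow> 'a \<Rightarrow> real" and ths rho eta theta0 :: real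
  assumes a: "alpha > 0" and b: "beta > 0"
    and M: "prob_space M"
    and meas: "\<And>t. (\<lambda>\<omega>. (X t \<omega>, Y t \<omega>)) \<in> M \<rightarrow>\<^sub>M borel \<Otimes>\<^sub>M borel"
    and dist: "\<And>t. distr M (borel \<Otimes>\<^sub>M borel) (\<lambda>\<omega>. (X t \<omega>, Y t \<omega>)) = G_joint mu1 mu2 alpha beta"
    and rho: "0 \<le> rho" "rho \<le> 1" and eta: "0 < eta" "eta < 1"
  defines "Y' \<equiv> (\<lambda>s \<omega>. rho * clf ths (X s \<omega>) + (1 - rho) * Y s \<omega>)"
  defines "A \<equiv> (\<integral>p. \<bar>fst p - snd p + ths\<bar> \<partial>G_joint mu1 mu2 alpha beta)"
    and "B \<equiv> (\<integral>p. \<bar>fst p - clf ths (fst p) + ths\<bar> \<partial>G_joint mu1 mu2 alpha beta)"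
  shows "sgd_iter eta theta0 X Y' t \<in> borel_measurable M \<and>
         integrable M (\<lambda>\<omega>. \<bar>sgd_iter eta theta0 X Y' t \<omega> - ths\<bar>) \<and>
         (\<integral>\<omega>. \<bar>sgd_iter eta theta0 X Y' t \<omega> - ths\<bar> \<partial>M)
           \<le> (1 - eta) ^ t * \<bar>theta0 - ths\<bar> + (1 - (1 - eta) ^ t) * (rho * B + (1 - rho) * A)"
proof -
  interpret M: prob_space M by (rule M)
  let ?G = "G_joint mu1 mu2 alpha beta"
  define w where "w p = \<bar>fst p - (rho * clf ths (fst p) + (1 - rho) * snd p) + ths\<bar>" for p :: "real \<times> real"
  have wm[measurable]: "w \<in> borel_measurable (borel \<Otimes>\<^sub>M borel)" unfolding w_def by measurable
  have Xm[measurable]: "X s \<in> borel_measurable M" for s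
    using measurable_compose[OF meas[of s] measurable_fst] by (simp add: comp_def)
  have Ym[measurable]: "Y s \<in> borel_measurable M" for s
    using measurable_compose[OF meas[of s] measurable_snd] by (simp add: comp_def)
  have wG: "integrable ?G w"
  proof (rule Bochner_Integration.integrable_bound)
    show "integrable ?G (\<lambda>p. rho * \<bar>fst p - clf ths (fst p) + ths\<bar> + (1 - rho) * \<bar>fst p - snd p + ths\<bar>)"
      by (intro Bochner_Integration.integrable_add integrable_mult_right G_int_A[OF a b] G_int_B[OF a b])
    show "w \<in> borel_measurable ?G" by (rule G_meas[OF a b wm])
    show "AE p in ?G. norm (w p) \<le> norm (rho * \<bar>fst p - clf ths (fst p) + ths\<bar> + (1 - rho) * \<bar>fst p - snd p + ths\<bar>)"
      by (rule AE_I2) (use rho w_le[OF rho] in \<open>auto simp: w_def\<close>)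
  qed
  have wint: "(\<integral>p. w p \<partial>?G) \<le> rho * B + (1 - rho) * A"
  proof -
    have "(\<integral>p. w p \<partial>?G) \<le> (\<integral>p. rho * \<bar>fst p - clf ths (fst p) + ths\<bar> + (1 - rho) * \<bar>fst p - snd p + ths\<bar> \<partial>?G)"
      by (rule integral_mono[OF wG]) (use w_le[OF rho] in \<open>auto simp: w_def intro!: Bochner_Integration.integrable_add integrable_mult_right G_int_A[OF a b] G_int_B[OF a b]\<close>)
    also have "\<dots> = rho * B + (1 - rho) * A"
      unfolding A_def B_def
      by (subst Bochner_Integration.integral_add) (auto intro!: integrable_mult_right G_int_A[OF a b] G_int_B[OF a b])
    finally show ?thesis .
  qed
  have W_eq: "(\<lambda>\<omega>. \<bar>X s \<omega> - Y' s \<omega> + ths\<bar>) = (\<lambda>\<omega>. w (X s \<omega>, Y s \<omega>))" for s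
    by (simp add: w_def Y'_def)
  have Wint: "integrable M (\<lambda>\<omega>. \<bar>X s \<omega> - Y' s \<omega> + ths\<bar>)" for s
    unfolding W_eq using integrable_distr_eq[OF meas[of s] wm] wG dist[of s] by simp
  have WE: "(\<integral>\<omega>. \<bar>X s \<omega> - Y' s \<omega> + ths\<bar> \<partial>M) \<le> rho * B + (1 - rho) * A" for s
  proof -
    have "(\<integral>\<omega>. \<bar>X s \<omega> - Y' s \<omega> + ths\<bar> \<partial>M) = (\<integral>p. w p \<partial>distr M (borel \<Otimes>\<^sub>M borel) (\<lambda>\<omega>. (X s \<omega>, Y s \<omega>)))"
      unfolding W_eq by (rule integral_distr[OF meas[of s] wm, symmetric])
    also have "\<dots> = (\<integral>p. w p \<partial>?G)" using dist[of s] by simp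
    finally show ?thesis using wint by simp
  qed
  let ?th = "sgd_iter eta theta0 X Y'"
  let ?B = "rho * B + (1 - rho) * A"
  show ?thesis
  proof (induction t)
    case 0
    show ?case by (simp add: M.prob_space)
  next
    case (Suc t)
    have th_m[measurable]: "?th t \<in> borel_measurable M" using Suc.IH by blast
    have e: "?th (Suc t) = (\<lambda>\<omega>. ?th t \<omega> - eta * (?th t \<omega> + X t \<omega> - (rho * clf ths (X t \<omega>) + (1 - rho) * Y t \<omega>)))"
      by (rule ext) (simp add: Y'_def)
    have m: "?th (Suc t) \<in> borel_measurable M"
      unfolding e by measurable
    have step: "\<bar>?th (Suc t) \<omega> - ths\<bar> \<le> (1 - eta) * \<bar>?th t \<omega> - ths\<bar> + eta * \<bar>X t \<omega> - Y' t \<omega> + ths\<bar>" for \<omega>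
      using sgd_step[OF eta] by simp
    have I2: "integrable M (\<lambda>\<omega>. (1 - eta) * \<bar>?th t \<omega> - ths\<bar> + eta * \<bar>X t \<omega> - Y' t \<omega> + ths\<bar>)"
      using Suc.IH Wint[of t] by (intro Bochner_Integration.integrable_add integrable_mult_right) auto
    have I: "integrable M (\<lambda>\<omega>. \<bar>?th (Suc t) \<omega> - ths\<bar>)"
    proof (rule Bochner_Integration.integrable_bound[OF I2])
      show "(\<lambda>\<omega>. \<bar>?th (Suc t) \<omega> - ths\<bar>) \<in> borel_measurable M" using m by measurable
      show "AE \<omega> in M. norm \<bar>?th (Suc t) \<omega> - ths\<bar> \<le> norm ((1 - eta) * \<bar>?th t \<omega> - ths\<bar> + eta * \<bar>X t \<omega> - Y' t \<omega> + ths\<bar>)"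
        by (rule AE_I2) (use step eta in \<open>auto intro: order_trans[OF _ abs_ge_self]\<close>)
    qed
    have "(\<integral>\<omega>. \<bar>?th (Suc t) \<omega> - ths\<bar> \<partial>M) \<le> (\<integral>\<omega>. (1 - eta) * \<bar>?th t \<omega> - ths\<bar> + eta * \<bar>X t \<omega> - Y' t \<omega> + ths\<bar> \<partial>M)"
      by (rule integral_mono[OF I I2 step])
    also have "\<dots> = (1 - eta) * (\<integral>\<omega>. \<bar>?th t \<omega> - ths\<bar> \<partial>M) + eta * (\<integral>\<omega>. \<bar>X t \<omega> - Y' t \<omega> + ths\<bar> \<partial>M)"
      using Suc.IH Wint[of t] by (subst Bochner_Integration.integral_add) auto
    also have "\<dots> \<le> (1 - eta) * ((1 - eta) ^ t * \<bar>theta0 - ths\<bar> + (1 - (1 - eta) ^ t) * ?B) + eta * ?B"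
      using Suc.IH WE[of t] eta by (intro add_mono mult_left_mono) auto
    also have "\<dots> = (1 - eta) ^ Suc t * \<bar>theta0 - ths\<bar> + (1 - (1 - eta) ^ Suc t) * ?B"
      by (simp add: algebra_simps)
    finally show ?case using m I by blast
  qed
qed

theorem theorem2:
  fixes mu1 mu2 alpha0 beta0 :: real
  assumes "mu1 < mu2" and "alpha0 > 0" and "beta0 > 0"
  defines "G \<equiv> G_joint mu1 mu2 alpha0 beta0"
    and "ths \<equiv> - (mu1 + mu2) / 2"
  defines "eps0 \<equiv> (\<integral>p. \<bar>fst p - snd p + ths\<bar> \<partial>G) - (\<integral>p. \<bar>fst p - clf ths (fst p) + ths\<bar> \<partial>G)"
  shows "\<exists>C1>0.
     (\<forall>theta. loss G theta - loss G ths \<le> C1 * \<bar>theta - ths\<bar>)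
   \<and> eps0 > 0
   \<and> C1 * eps0 > 0
   \<and> (\<forall>rho theta0 eta (M :: 'a measure) X Y.
        0 \<le> rho \<and> rho \<le> 1 \<and> 0 < eta \<and> eta < 1 \<and> prob_space M
        \<and> prob_space.indep_vars M (\<lambda>_. borel \<Otimes>\<^sub>M borel) (\<lambda>t \<omega>. (X t \<omega>, Y t \<omega>)) UNIV
        \<and> (\<forall>t. distr M (borel \<Otimes>\<^sub>M borel) (\<lambda>\<omega>. (X t \<omega>, Y t \<omega>)) = G)
        \<longrightarrow> (\<forall>t::nat.
              (\<integral>\<omega>. loss G (sgd_iter eta theta0 X
                     (\<lambda>s \<omega>. rho * clf ths (X s \<omega>) + (1 - rho) * Y s \<omega>) t \<omega>) \<partial>M)
              - loss G ths
              \<le> C1 * \<bar>theta0 - ths\<bar> * (1 - eta) ^ t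
                 + (1 - (1 - eta) ^ t)
                   * (C1 * (\<integral>p. \<bar>fst p - snd p + ths\<bar> \<partial>G) - C1 * eps0 * rho)))
   \<and> (\<forall>theta0 eta t rho1 rho2. 0 < eta \<and> eta < 1 \<and> t \<ge> (1::nat)
        \<and> 0 \<le> rho1 \<and> rho1 < rho2 \<and> rho2 \<le> 1 \<longrightarrow>
        C1 * \<bar>theta0 - ths\<bar> * (1 - eta) ^ t
          + (1 - (1 - eta) ^ t) * (C1 * (\<integral>p. \<bar>fst p - snd p + ths\<bar> \<partial>G) - C1 * eps0 * rho2)
        < C1 * \<bar>theta0 - ths\<bar> * (1 - eta) ^ t
          + (1 - (1 - eta) ^ t) * (C1 * (\<integral>p. \<bar>fst p - snd p + ths\<bar> \<partial>G) - C1 * eps0 * rho1))"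
proof -
  have a: "alpha0 > 0" and b: "beta0 > 0" using assms(2,3) .
  define C1 where "C1 = ggD alpha0 beta0"
  have C1: "C1 > 0" unfolding C1_def by (rule ggD_pos[OF a b])
  define A where "A = (\<integral>p. \<bar>fst p - snd p + ths\<bar> \<partial>G)"
  define B where "B = (\<integral>p. \<bar>fst p - clf ths (fst p) + ths\<bar> \<partial>G)"
  have epsAB: "eps0 = A - B" unfolding eps0_def A_def B_def ..
  have eps: "eps0 > 0" unfolding eps0_def G_def by (rule eps0_pos[OF a b])
  have lip: "loss G theta - loss G ths \<le> C1 * \<bar>theta - ths\<bar>" for theta
    using loss_lip[OF a b, of mu1 mu2 theta ths] unfolding G_def C1_def by simp
  have sgd: "(\<integral>\<omega>. loss G (sgd_iter eta theta0 X
                     (\<lambda>s \<omega>. rho * clf ths (X s \<omega>) + (1 - rho) * Y s \<omega>) t \<omega>) \<partial>M)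
              - loss G ths
              \<le> C1 * \<bar>theta0 - ths\<bar> * (1 - eta) ^ t
                 + (1 - (1 - eta) ^ t)
                   * (C1 * A - C1 * eps0 * rho)"
    if h: "0 \<le> rho \<and> rho \<le> 1 \<and> 0 < eta \<and> eta < 1 \<and> prob_space M
        \<and> prob_space.indep_vars M (\<lambda>_. borel \<Otimes>\<^sub>M borel) (\<lambda>t \<omega>. (X t \<omega>, Y t \<omega>)) UNIV
        \<and> (\<forall>t. distr M (borel \<Otimes>\<^sub>M borel) (\<lambda>\<omega>. (X t \<omega>, Y t \<omega>)) = G)"
    for rho theta0 eta and M :: "'a measure" and X Y t
  proof -
    have rho: "0 \<le> rho" "rho \<le> 1" and eta: "0 < eta" "eta < 1" and Mp: "prob_space M" using h by auto
    interpret M: prob_space M by (rule Mp)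
    have meas: "(\<lambda>\<omega>. (X s \<omega>, Y s \<omega>)) \<in> M \<rightarrow>\<^sub>M borel \<Otimes>\<^sub>M borel" for s
      using h unfolding M.indep_vars_def by auto
    have dist: "distr M (borel \<Otimes>\<^sub>M borel) (\<lambda>\<omega>. (X s \<omega>, Y s \<omega>)) = G_joint mu1 mu2 alpha0 beta0" for s
      using h unfolding G_def by auto
    let ?th = "sgd_iter eta theta0 X (\<lambda>s \<omega>. rho * clf ths (X s \<omega>) + (1 - rho) * Y s \<omega>) t"
    have SB: "?th \<in> borel_measurable M \<and> integrable M (\<lambda>\<omega>. \<bar>?th \<omega> - ths\<bar>) \<and>
         (\<integral>\<omega>. \<bar>?th \<omega> - ths\<bar> \<partial>M) \<le> (1 - eta) ^ t * \<bar>theta0 - ths\<bar> + (1 - (1 - eta) ^ t) * (rho * B + (1 - rho) * A)"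
      unfolding A_def B_def G_def by (rule sgd_bound[OF a b Mp meas dist rho eta])
    have thm': "?th \<in> borel_measurable M" using SB by blast
    have Ith: "integrable M (\<lambda>\<omega>. \<bar>?th \<omega> - ths\<bar>)" using SB by blast
    have lm: "(\<lambda>\<omega>. loss G (?th \<omega>)) \<in> borel_measurable M"
      using measurable_compose[OF thm' loss_cont[OF a b, of mu1 mu2]] unfolding G_def by (simp add: comp_def)
    have Il: "integrable M (\<lambda>\<omega>. loss G (?th \<omega>))"
    proof (rule Bochner_Integration.integrable_bound[where f="\<lambda>_. 1::real"])
      show "integrable M (\<lambda>_. 1::real)" by simp
      show "(\<lambda>\<omega>. loss G (?th \<omega>)) \<in> borel_measurable M" by (rule lm)
      show "AE \<omega> in M. norm (loss G (?th \<omega>)) \<le> norm (1::real)"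
        by (rule AE_I2) (use loss_bounds[OF a b] in \<open>auto simp: G_def\<close>)
    qed
    have "(\<integral>\<omega>. loss G (?th \<omega>) \<partial>M) - loss G ths = (\<integral>\<omega>. loss G (?th \<omega>) - loss G ths \<partial>M)"
      using Il by (simp add: M.prob_space)
    also have "\<dots> \<le> (\<integral>\<omega>. C1 * \<bar>?th \<omega> - ths\<bar> \<partial>M)"
      by (rule integral_mono) (use Il Ith lip in auto)
    also have "\<dots> = C1 * (\<integral>\<omega>. \<bar>?th \<omega> - ths\<bar> \<partial>M)" by simp
    also have "\<dots> \<le> C1 * ((1 - eta) ^ t * \<bar>theta0 - ths\<bar> + (1 - (1 - eta) ^ t) * (rho * B + (1 - rho) * A))"
      using SB C1 by (intro mult_left_mono) auto
    also have "\<dots> = C1 * \<bar>theta0 - ths\<bar> * (1 - eta) ^ t + (1 - (1 - eta) ^ t) * (C1 * A - C1 * eps0 * rho)"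
      unfolding epsAB by (simp add: algebra_simps)
    finally show ?thesis .
  qed
  have mono: "C1 * \<bar>theta0 - ths\<bar> * (1 - eta) ^ t
          + (1 - (1 - eta) ^ t) * (C1 * A - C1 * eps0 * rho2)
        < C1 * \<bar>theta0 - ths\<bar> * (1 - eta) ^ t
          + (1 - (1 - eta) ^ t) * (C1 * A - C1 * eps0 * rho1)"
    if h: "0 < eta \<and> eta < 1 \<and> t \<ge> (1::nat) \<and> 0 \<le> rho1 \<and> rho1 < rho2 \<and> rho2 \<le> 1"
    for theta0 eta t rho1 rho2
  proof -
    have "(1 - eta) ^ t < 1" using h by (intro power_less_one_iff[THEN iffD2]) auto
    hence p: "1 - (1 - eta) ^ t > 0" by simp
    have "C1 * eps0 * rho1 < C1 * eps0 * rho2" using h C1 eps by simp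
    hence "C1 * A - C1 * eps0 * rho2 < C1 * A - C1 * eps0 * rho1" by simp
    thus ?thesis using p by simp
  qed
  show ?thesis
    apply (rule exI[of _ C1])
    using C1 eps lip sgd mono unfolding A_def by (auto simp: mult_pos_pos)
qed

end
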